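(* Let $G$ be a connected graph. Then $\gamma_{cI}(G)=2$ if and only if $G\in\{K_{1,n},K_{2,n},K^*_{2,n}\}$ for some $n\ge1$, where $K^*_{2,n}$ is the graph obtained from the complete bipartite graph $K_{2,n}$ by joining (adding the edge between) the two vertices of its $2$-vertex partite set.
   Context: All graphs are finite and simple; $N(v)$ is the open neighborhood of $v$. For $f:V(G)\to\{0,1,2\}$ let $V_i=\{v: f(v)=i\}$ and $\omega(f)=\sum_v f(v)$. A covering Italian dominating function (CID function) of $G$ is an $f:V(G)\to\{0,1,2\}$ such that every vertex $v$ with $f(v)=0$ satisfies $\sum_{u\in N(v)}f(u)\ge 2$, and $V_0$ is an independent set. $\gamma_{cI}(G)$ is the minimum of $\omega(f)$ over all CID functions of $G$. *)

theory Defs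
  imports Main
begin

definition graph :: "'a set \<Rightarrow> ('a \<Rightarrow> 'a \<Rightarrow> bool) \<Rightarrow> bool" where
  "graph V E \<longleftrightarrow> finite V \<and> (\<forall>u v. E u v \<longrightarrow> u \<in> V \<and> v \<in> V)
     \<and> (\<forall>u v. E u v \<longrightarrow> E v u) \<and> (\<forall>v. \<not> E v v)"

definition connected_graph :: "'a set \<Rightarrow> ('a \<Rightarrow> 'a \<Rightarrow> bool) \<Rightarrow> bool" where
  "connected_graph V E \<longleftrightarrow> graph V E \<and> V \<noteq> {} \<and>
     (\<forall>u\<in>V. \<forall>v\<in>V. (E\<^sup>*\<^sup>*) u v)"

definition nbhd :: "'a set \<Rightarrow> ('a \<Rightarrow> 'a \<Rightarrow> bool) \<Rightarrow> 'a \<Rightarrow> 'a set" where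
  "nbhd V E v = {u \<in> V. E v u}"

definition CID_function :: "'a set \<Rightarrow> ('a \<Rightarrow> 'a \<Rightarrow> bool) \<Rightarrow> ('a \<Rightarrow> nat) \<Rightarrow> bool" where
  "CID_function V E f \<longleftrightarrow> (\<forall>v\<in>V. f v \<le> 2)
     \<and> (\<forall>v\<in>V. f v = 0 \<longrightarrow> (\<Sum>u\<in>nbhd V E v. f u) \<ge> 2)
     \<and> (\<forall>u\<in>V. \<forall>v\<in>V. f u = 0 \<and> f v = 0 \<longrightarrow> \<not> E u v)"

definition weight :: "'a set \<Rightarrow> ('a \<Rightarrow> nat) \<Rightarrow> nat" where
  "weight V f = (\<Sum>v\<in>V. f v)"

definition gamma_cI :: "'a set \<Rightarrow> ('a \<Rightarrow> 'a \<Rightarrow> bool) \<Rightarrow> nat" where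
  "gamma_cI V E = Min {weight V f | f. CID_function V E f}"

definition is_K_bip :: "nat \<Rightarrow> nat \<Rightarrow> 'a set \<Rightarrow> ('a \<Rightarrow> 'a \<Rightarrow> bool) \<Rightarrow> bool" where
  "is_K_bip m n V E \<longleftrightarrow> (\<exists>A B. A \<union> B = V \<and> A \<inter> B = {} \<and> card A = m \<and> card B = n
     \<and> (\<forall>u v. E u v \<longleftrightarrow> (u \<in> A \<and> v \<in> B) \<or> (u \<in> B \<and> v \<in> A)))"

definition is_K2n_star :: "nat \<Rightarrow> 'a set \<Rightarrow> ('a \<Rightarrow> 'a \<Rightarrow> bool) \<Rightarrow> bool" where
  "is_K2n_star n V E \<longleftrightarrow> (\<exists>A B. A \<union> B = V \<and> A \<inter> B = {} \<and> card A = 2 \<and> card B = n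
     \<and> (\<forall>u v. E u v \<longleftrightarrow> (u \<in> A \<and> v \<in> B) \<or> (u \<in> B \<and> v \<in> A) \<or> (u \<in> A \<and> v \<in> A \<and> u \<noteq> v)))"

end

theory Submission
  imports Defs
begin

lemma weight_ge2:
  assumes g: "graph V E" and c: "card V \<ge> 2" and f: "CID_function V E f"
  shows "weight V f \<ge> 2"
proof (rule ccontr)
  assume "\<not> 2 \<le> weight V f"
  hence w: "sum f V < 2" by (simp add: weight_def)
  have fin: "finite V" using g by (simp add: graph_def)
  have "\<exists>v\<in>V. f v = 0"
  proof (rule ccontr)
    assume "\<not> ?thesis"
    hence "\<forall>v\<in>V. 1 \<le> f v" by auto
    hence "sum (\<lambda>_. 1::nat) V \<le> sum f V" by (intro sum_mono) auto
    thus False using w c by simp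
  qed
  then obtain v where v: "v \<in> V" "f v = 0" by blast
  have "sum f (nbhd V E v) \<le> sum f V"
    by (rule sum_mono2[OF fin]) (auto simp: nbhd_def)
  moreover have "sum f (nbhd V E v) \<ge> 2" using f v by (simp add: CID_function_def)
  ultimately show False using w by simp
qed

lemma finite_weights:
  assumes fin: "finite V"
  shows "finite {weight V f | f. CID_function V E f}"
proof (rule finite_subset[of _ "{..2 * card V}"])
  show "{weight V f | f. CID_function V E f} \<subseteq> {..2 * card V}"
  proof
    fix x assume "x \<in> {weight V f | f. CID_function V E f}"
    then obtain f where x: "x = weight V f" and f: "CID_function V E f" by blast
    have "sum f V \<le> sum (\<lambda>_. 2::nat) V"
      using f by (intro sum_mono) (auto simp: CID_function_def)
    thus "x \<in> {..2 * card V}" using x by (simp add: weight_def mult.commute)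
  qed
qed simp

lemma gamma_eq2:
  assumes g: "graph V E" and c: "card V \<ge> 2" and f: "CID_function V E f"
    and w: "weight V f = 2"
  shows "gamma_cI V E = 2"
  unfolding gamma_cI_def
proof (rule Min_eqI)
  show "finite {weight V f | f. CID_function V E f}"
    using g by (intro finite_weights) (simp add: graph_def)
  show "\<And>y. y \<in> {weight V f | f. CID_function V E f} \<Longrightarrow> 2 \<le> y"
    using weight_ge2[OF g c] by auto
  show "2 \<in> {weight V f | f. CID_function V E f}" using f w by (auto intro!: exI[of _ f])
qed



lemma witness_gen:
  assumes g: "graph V E" and AB: "A \<union> B = V" "A \<inter> B = {}"
    and indep: "\<forall>u\<in>B. \<forall>v\<in>B. \<not> E u v"
    and nb: "\<forall>v\<in>B. nbhd V E v = A"
    and cA: "card A = 1 \<or> card A = 2" and cB: "card B \<ge> 1"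
  shows "gamma_cI V E = 2"
proof -
  have fin: "finite V" using g by (simp add: graph_def)
  have finA: "finite A" and finB: "finite B" using fin AB by auto
  define f where "f v = (if v \<in> A then 2 div card A else 0)" for v
  have sA: "sum f A = 2" using cA by (auto simp: f_def)
  have sV: "sum f V = 2"
  proof -
    have "sum f V = sum f A + sum f B" using AB finA finB by (metis sum.union_disjoint)
    also have "sum f B = 0" using AB(2) by (intro sum.neutral) (auto simp: f_def)
    finally show ?thesis using sA by simp
  qed
  have cV: "card V \<ge> 2"
    using AB finA finB cA cB card_Un_disjoint[OF finA finB] by auto
  have "CID_function V E f"
    unfolding CID_function_def
  proof (intro conjI ballI impI)
    fix v assume "v \<in> V" thus "f v \<le> 2" using cA by (auto simp: f_def)
  next
    fix v assume v: "v \<in> V" "f v = 0"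
    hence "v \<in> B" using AB cA by (auto simp: f_def split: if_splits)
    thus "2 \<le> sum f (nbhd V E v)" using nb sA by simp
  next
    fix u v assume uv: "u \<in> V" "v \<in> V" "f u = 0 \<and> f v = 0"
    hence "u \<in> B" "v \<in> B" using AB cA by (auto simp: f_def split: if_splits)
    thus "\<not> E u v" using indep by blast
  qed
  thus ?thesis using gamma_eq2[OF g cV] sV by (simp add: weight_def)
qed

lemma backward:
  assumes g: "graph V E"
    and h: "is_K_bip 1 n V E \<or> is_K_bip 2 n V E \<or> is_K2n_star n V E" and n: "n \<ge> 1"
  shows "gamma_cI V E = 2"
  using h
proof (elim disjE)
  assume "is_K_bip 1 n V E"
  then obtain A B where AB: "A \<union> B = V" "A \<inter> B = {}" "card A = 1" "card B = n"
    and e: "\<forall>u v. E u v \<longleftrightarrow> (u \<in> A \<and> v \<in> B) \<or> (u \<in> B \<and> v \<in> A)"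
    unfolding is_K_bip_def by blast
  show ?thesis
    by (rule witness_gen[OF g AB(1,2)]) (use AB e n in \<open>auto simp: nbhd_def\<close>)
next
  assume "is_K_bip 2 n V E"
  then obtain A B where AB: "A \<union> B = V" "A \<inter> B = {}" "card A = 2" "card B = n"
    and e: "\<forall>u v. E u v \<longleftrightarrow> (u \<in> A \<and> v \<in> B) \<or> (u \<in> B \<and> v \<in> A)"
    unfolding is_K_bip_def by blast
  show ?thesis
    by (rule witness_gen[OF g AB(1,2)]) (use AB e n in \<open>auto simp: nbhd_def\<close>)
next
  assume "is_K2n_star n V E"
  then obtain A B where AB: "A \<union> B = V" "A \<inter> B = {}" "card A = 2" "card B = n"
    and e: "\<forall>u v. E u v \<longleftrightarrow> (u \<in> A \<and> v \<in> B) \<or> (u \<in> B \<and> v \<in> A) \<or> (u \<in> A \<and> v \<in> A \<and> u \<noteq> v)"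
    unfolding is_K2n_star_def by blast
  show ?thesis
    by (rule witness_gen[OF g AB(1,2)]) (use AB e n in \<open>auto simp: nbhd_def\<close>)
qed


lemma sum_support:
  assumes "finite N" and "\<forall>v\<in>N - S. f v = (0::nat)"
  shows "sum f N = sum f (N \<inter> S)"
proof -
  have "sum f N = sum f (N \<inter> S) + sum f (N - S)"
    using assms(1) by (metis Int_Diff_Un Int_Diff_disjoint finite_Diff finite_Int sum.union_disjoint)
  moreover have "sum f (N - S) = 0" using assms(2) by simp
  ultimately show ?thesis by simp
qed

theorem proposition9:
  fixes V :: "'a set" and E :: "'a \<Rightarrow> 'a \<Rightarrow> bool"
  assumes "connected_graph V E"
  shows "gamma_cI V E = 2 \<longleftrightarrow>
    (\<exists>n\<ge>1. is_K_bip 1 n V E \<or> is_K_bip 2 n V E \<or> is_K2n_star n V E)"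
proof
  have g: "graph V E" and ne: "V \<noteq> {}" and conn: "\<forall>u\<in>V. \<forall>v\<in>V. (E\<^sup>*\<^sup>*) u v"
    using assms by (auto simp: connected_graph_def)
  have fin: "finite V" using g by (simp add: graph_def)
  have Ein: "\<And>u v. E u v \<Longrightarrow> u \<in> V \<and> v \<in> V" and Esym: "\<And>u v. E u v \<Longrightarrow> E v u"
    and Eirr: "\<And>v. \<not> E v v" using g by (auto simp: graph_def)
  {
    assume gam: "gamma_cI V E = 2"
    let ?W = "{weight V f | f. CID_function V E f}"
    have finW: "finite ?W" using finite_weights[OF fin] .
    have one: "CID_function V E (\<lambda>_. 1)" by (simp add: CID_function_def)
    have neW: "?W \<noteq> {}" using one by blast
    have "2 \<in> ?W" using Min_in[OF finW neW] gam unfolding gamma_cI_def by simp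
    then obtain f where f: "CID_function V E f" and w: "sum f V = 2"
      by (auto simp: weight_def)
    have cV: "card V \<ge> 2"
    proof (rule ccontr)
      assume "\<not> ?thesis"
      moreover have "card V \<noteq> 0" using ne fin by simp
      ultimately have "card V = 1" by linarith
      hence "weight V (\<lambda>_. 1) = 1" by (simp add: weight_def)
      hence "1 \<in> ?W" using one by (auto intro!: exI[of _ "\<lambda>_. 1"])
      hence "Min ?W \<le> 1" by (rule Min_le[OF finW])
      thus False using gam unfolding gamma_cI_def by simp
    qed
    have f2: "\<forall>v\<in>V. f v \<le> 2" and f0: "\<forall>v\<in>V. f v = 0 \<longrightarrow> sum f (nbhd V E v) \<ge> 2"
      and find: "\<forall>u\<in>V. \<forall>v\<in>V. f u = 0 \<and> f v = 0 \<longrightarrow> \<not> E u v"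
      using f by (auto simp: CID_function_def)
    define S where "S = {v \<in> V. f v > 0}"
    define B where "B = V - S"
    have SV: "S \<subseteq> V" and finS: "finite S" using fin by (auto simp: S_def)
    have fB: "\<forall>v\<in>B. f v = 0" "B \<subseteq> V" by (auto simp: B_def S_def)
    have VSB: "V = S \<union> B" "S \<inter> B = {}" using SV by (auto simp: B_def)
    have finB: "finite B" using fin by (simp add: B_def)
    have sumN: "\<And>N. N \<subseteq> V \<Longrightarrow> sum f N = sum f (N \<inter> S)"
      by (rule sum_support) (auto intro: finite_subset[OF _ fin] simp: S_def)
    have sS: "sum f S = 2" using sumN[of V] w SV by (simp add: Int_absorb1)
    have "card S \<le> sum f S"
      using sum_mono[of S "\<lambda>_. 1::nat" f] by (auto simp: S_def)
    hence cS: "card S \<le> 2" using sS by simp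
    have "S \<noteq> {}" using sS by auto
    hence "card S \<noteq> 0" using finS by simp
    hence cS': "card S = 1 \<or> card S = 2" using cS by linarith
    have Bind: "\<forall>u\<in>B. \<forall>v\<in>B. \<not> E u v" using find fB by blast
    have nbB: "\<And>v. v \<in> B \<Longrightarrow> sum f (nbhd V E v \<inter> S) \<ge> 2"
    proof -
      fix v assume v: "v \<in> B"
      have "nbhd V E v \<subseteq> V" by (auto simp: nbhd_def)
      hence "sum f (nbhd V E v) = sum f (nbhd V E v \<inter> S)" by (rule sumN)
      moreover have "sum f (nbhd V E v) \<ge> 2" using f0 fB v by auto
      ultimately show "sum f (nbhd V E v \<inter> S) \<ge> 2" by simp
    qed
    have cBn: "card V = card S + card B" using VSB finS finB by (simp add: card_Un_disjoint)
    show "\<exists>n\<ge>1. is_K_bip 1 n V E \<or> is_K_bip 2 n V E \<or> is_K2n_star n V E"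
      using cS'
    proof (elim disjE)
      assume "card S = 1"
      then obtain c where Sc: "S = {c}" by (auto simp: card_Suc_eq)
      have "c \<in> V" using SV Sc by auto
      have adj: "\<And>v. v \<in> B \<Longrightarrow> E v c"
      proof (rule ccontr)
        fix v assume v: "v \<in> B" "\<not> E v c"
        hence "nbhd V E v \<inter> S = {}" using Sc by (auto simp: nbhd_def)
        thus False using nbB[OF v(1)] by simp
      qed
      have "is_K_bip 1 (card B) V E"
        unfolding is_K_bip_def
      proof (rule exI[of _ S], rule exI[of _ B], intro conjI allI)
        fix u v
        show "E u v \<longleftrightarrow> (u \<in> S \<and> v \<in> B) \<or> (u \<in> B \<and> v \<in> S)"
        proof
          assume "E u v"
          thus "(u \<in> S \<and> v \<in> B) \<or> (u \<in> B \<and> v \<in> S)"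
          proof -
            have "u \<in> S \<or> u \<in> B" "v \<in> S \<or> v \<in> B" using Ein[OF \<open>E u v\<close>] VSB(1) by auto
            moreover have "\<not> (u \<in> B \<and> v \<in> B)" using Bind \<open>E u v\<close> by blast
            moreover have "\<not> (u \<in> S \<and> v \<in> S)" using Eirr \<open>E u v\<close> Sc by auto
            ultimately show ?thesis by blast
          qed
        next
          assume "(u \<in> S \<and> v \<in> B) \<or> (u \<in> B \<and> v \<in> S)"
          thus "E u v" using adj Esym Sc by blast
        qed
      qed (use VSB \<open>card S = 1\<close> in auto)
      thus ?thesis using cBn cV \<open>card S = 1\<close> by (intro exI[of _ "card B"]) auto
    next
      assume "card S = 2"
      then obtain a b where Sab: "S = {a, b}" "a \<noteq> b" by (auto simp: card_Suc_eq numeral_2_eq_2)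
      have pos: "a \<in> V" "b \<in> V" "f a > 0" "f b > 0" using Sab(1) unfolding S_def by blast+
      have "f a + f b = 2" using sS Sab by simp
      hence ab: "a \<in> V" "b \<in> V" "f a = 1" "f b = 1" using pos by auto
      have adj: "E v a \<and> E v b" if v: "v \<in> B" for v
      proof (rule ccontr)
        assume nn: "\<not> (E v a \<and> E v b)"
        have "nbhd V E v \<inter> S \<subseteq> {a} \<or> nbhd V E v \<inter> S \<subseteq> {b}"
          using nn Sab by (auto simp: nbhd_def)
        hence "sum f (nbhd V E v \<inter> S) \<le> 1"
        proof
          assume "nbhd V E v \<inter> S \<subseteq> {a}"
          hence "nbhd V E v \<inter> S = {} \<or> nbhd V E v \<inter> S = {a}" by blast
          thus ?thesis using ab by auto
        next
          assume "nbhd V E v \<inter> S \<subseteq> {b}"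
          hence "nbhd V E v \<inter> S = {} \<or> nbhd V E v \<inter> S = {b}" by blast
          thus ?thesis using ab by auto
        qed
        thus False using nbB[OF v] by simp
      qed
      show ?thesis
      proof (cases "B = {}")
        case True
        hence Vab: "V = {a, b}" using VSB Sab by simp
        have "(E\<^sup>*\<^sup>*) a b" using conn ab by blast
        then obtain y where y: "E a y" using Sab(2) by (metis converse_rtranclpE)
        hence "y = b" using Ein[of a y] Eirr[of a] Vab by auto
        hence Eab: "E a b" using y by simp
        have "is_K_bip 1 1 V E"
          unfolding is_K_bip_def
        proof (rule exI[of _ "{a}"], rule exI[of _ "{b}"], intro conjI allI)
          fix u v
          show "E u v \<longleftrightarrow> (u \<in> {a} \<and> v \<in> {b}) \<or> (u \<in> {b} \<and> v \<in> {a})"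
            using Ein[of u v] Eirr[of u] Vab Eab Esym by auto
        qed (use Vab Sab in auto)
        thus ?thesis by auto
      next
        case False
        hence n1: "card B \<ge> 1" using finB by (simp add: Suc_leI card_gt_0_iff)
        show ?thesis
        proof (cases "E a b")
          case True
          have "is_K2n_star (card B) V E"
            unfolding is_K2n_star_def
          proof (rule exI[of _ S], rule exI[of _ B], intro conjI allI)
            fix u v
            show "E u v \<longleftrightarrow> (u \<in> S \<and> v \<in> B) \<or> (u \<in> B \<and> v \<in> S) \<or> (u \<in> S \<and> v \<in> S \<and> u \<noteq> v)"
            proof
              assume "E u v"
              thus "(u \<in> S \<and> v \<in> B) \<or> (u \<in> B \<and> v \<in> S) \<or> (u \<in> S \<and> v \<in> S \<and> u \<noteq> v)"
              proof -
                have "u \<in> S \<or> u \<in> B" "v \<in> S \<or> v \<in> B" using Ein[OF \<open>E u v\<close>] VSB(1) by auto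
                moreover have "\<not> (u \<in> B \<and> v \<in> B)" using Bind \<open>E u v\<close> by blast
                moreover have "u \<noteq> v" using Eirr \<open>E u v\<close> by auto
                ultimately show ?thesis by blast
              qed
            next
              assume "(u \<in> S \<and> v \<in> B) \<or> (u \<in> B \<and> v \<in> S) \<or> (u \<in> S \<and> v \<in> S \<and> u \<noteq> v)"
              thus "E u v" using adj Esym Sab True by blast
            qed
          qed (use VSB \<open>card S = 2\<close> in auto)
          thus ?thesis using n1 by blast
        next
          case False
          have "is_K_bip 2 (card B) V E"
            unfolding is_K_bip_def
          proof (rule exI[of _ S], rule exI[of _ B], intro conjI allI)
            fix u v
            show "E u v \<longleftrightarrow> (u \<in> S \<and> v \<in> B) \<or> (u \<in> B \<and> v \<in> S)"
            proof
              assume e: "E u v"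
              have "\<not> (u \<in> S \<and> v \<in> S)" using e False Esym[of b a] Eirr Sab by auto
              moreover have "u \<in> S \<or> u \<in> B" "v \<in> S \<or> v \<in> B" using Ein[OF e] VSB(1) by auto
              moreover have "\<not> (u \<in> B \<and> v \<in> B)" using Bind e by blast
              ultimately show "(u \<in> S \<and> v \<in> B) \<or> (u \<in> B \<and> v \<in> S)" by blast
            next
              assume "(u \<in> S \<and> v \<in> B) \<or> (u \<in> B \<and> v \<in> S)"
              thus "E u v" using adj Esym Sab by blast
            qed
          qed (use VSB \<open>card S = 2\<close> in auto)
          thus ?thesis using n1 by blast
        qed
      qed
    qed
  }
  {
    assume "\<exists>n\<ge>1. is_K_bip 1 n V E \<or> is_K_bip 2 n V E \<or> is_K2n_star n V E"
    thus "gamma_cI V E = 2" using backward[OF g] by blast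
  }
qed

end
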